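(* Suppose $p_j,p_{j'}$ (with $j<j'$, on segments $s_i,s_{i'}$ respectively) are two consecutive reflection points of $\mathrm{OPT}$ in its orientation, i.e. no other reflection point is visited between them. Then $p_j$ and $p_{j'}$ are not both left reflection points and not both right reflection points. Furthermore, if $s_i$ is to the left of $s_{i'}$, then $p_j$ is a right reflection point and $p_{j'}$ is a left reflection point (and the opposite holds if $s_{i'}$ is to the left of $s_i$).
   Context: Instance: vertical line segments $s_1,\dots,s_n$ in $\mathbb{R}^2$, each of length $1$, with pairwise distinct $x$-coordinates. A tour is a cyclic sequence of points $p_1,\dots,p_\sigma$, each on some segment, with every segment containing at least one $p_j$; the straight segments joining consecutive points are legs. $\mathrm{OPT}$ is a fixed minimum-cost tour, oriented $p_1\to p_2\to\cdots$, with no two consecutive points on the same segment (no vertical legs) and not self-crossing. A point $p_j$ of $\mathrm{OPT}$ on segment $s$ is a left (resp. right) reflection point if both of its incident legs lie in the half-plane $x\le x(s)$ (resp. $x\ge x(s)$); a reflection point is a left or right reflection point. *)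

theory Defs
  imports "HOL-Analysis.Analysis"
begin

definition seg :: "(nat \<Rightarrow> real \<times> real) \<Rightarrow> nat \<Rightarrow> (real \<times> real) set" where
  "seg c k = {q. fst q = fst (c k) \<and> snd (c k) \<le> snd q \<and> snd q \<le> snd (c k) + 1}"

definition nxt :: "nat \<Rightarrow> nat \<Rightarrow> nat" where
  "nxt \<sigma> j = (if j = \<sigma> then 1 else j + 1)"

definition prv :: "nat \<Rightarrow> nat \<Rightarrow> nat" where
  "prv \<sigma> j = (if j = 1 then \<sigma> else j - 1)"

definition is_tour :: "nat \<Rightarrow> (nat \<Rightarrow> real \<times> real) \<Rightarrow> nat \<Rightarrow> (nat \<Rightarrow> real \<times> real) \<Rightarrow> bool" where
  "is_tour n c \<sigma> p \<longleftrightarrow> 1 \<le> \<sigma> \<and>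
     (\<forall>j\<in>{1..\<sigma>}. \<exists>k\<in>{1..n}. p j \<in> seg c k) \<and>
     (\<forall>k\<in>{1..n}. \<exists>j\<in>{1..\<sigma>}. p j \<in> seg c k)"

definition tour_cost :: "nat \<Rightarrow> (nat \<Rightarrow> real \<times> real) \<Rightarrow> real" where
  "tour_cost \<sigma> p = (\<Sum>j=1..\<sigma>. dist (p j) (p (nxt \<sigma> j)))"

definition is_opt_tour :: "nat \<Rightarrow> (nat \<Rightarrow> real \<times> real) \<Rightarrow> nat \<Rightarrow> (nat \<Rightarrow> real \<times> real) \<Rightarrow> bool" where
  "is_opt_tour n c \<sigma> p \<longleftrightarrow> is_tour n c \<sigma> p \<and>
     (\<forall>\<sigma>' q. is_tour n c \<sigma>' q \<longrightarrow> tour_cost \<sigma> p \<le> tour_cost \<sigma>' q)"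

definition no_vertical_legs :: "nat \<Rightarrow> (nat \<Rightarrow> real \<times> real) \<Rightarrow> nat \<Rightarrow> (nat \<Rightarrow> real \<times> real) \<Rightarrow> bool" where
  "no_vertical_legs n c \<sigma> p \<longleftrightarrow>
     (\<forall>j\<in>{1..\<sigma>}. \<not> (\<exists>k\<in>{1..n}. p j \<in> seg c k \<and> p (nxt \<sigma> j) \<in> seg c k))"

definition crosses :: "real \<times> real \<Rightarrow> real \<times> real \<Rightarrow> real \<times> real \<Rightarrow> real \<times> real \<Rightarrow> bool" where
  "crosses a b a' b' \<longleftrightarrow> (\<exists>z. closed_segment a b \<inter> closed_segment a' b' = {z} \<and>
      z \<notin> {a, b, a', b'})"

definition self_crossing :: "nat \<Rightarrow> (nat \<Rightarrow> real \<times> real) \<Rightarrow> bool" where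
  "self_crossing \<sigma> p \<longleftrightarrow> (\<exists>j\<in>{1..\<sigma>}. \<exists>j'\<in>{1..\<sigma>}. j \<noteq> j' \<and>
      crosses (p j) (p (nxt \<sigma> j)) (p j') (p (nxt \<sigma> j')))"

definition left_refl :: "nat \<Rightarrow> (nat \<Rightarrow> real \<times> real) \<Rightarrow> nat \<Rightarrow> (nat \<Rightarrow> real \<times> real) \<Rightarrow> nat \<Rightarrow> bool" where
  "left_refl n c \<sigma> p j \<longleftrightarrow> (\<exists>k\<in>{1..n}. p j \<in> seg c k \<and>
      closed_segment (p (prv \<sigma> j)) (p j) \<subseteq> {q. fst q \<le> fst (c k)} \<and>
      closed_segment (p j) (p (nxt \<sigma> j)) \<subseteq> {q. fst q \<le> fst (c k)})"

definition right_refl :: "nat \<Rightarrow> (nat \<Rightarrow> real \<times> real) \<Rightarrow> nat \<Rightarrow> (nat \<Rightarrow> real \<times> real) \<Rightarrow> nat \<Rightarrow> bool" where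
  "right_refl n c \<sigma> p j \<longleftrightarrow> (\<exists>k\<in>{1..n}. p j \<in> seg c k \<and>
      closed_segment (p (prv \<sigma> j)) (p j) \<subseteq> {q. fst q \<ge> fst (c k)} \<and>
      closed_segment (p j) (p (nxt \<sigma> j)) \<subseteq> {q. fst q \<ge> fst (c k)})"

definition refl_pt :: "nat \<Rightarrow> (nat \<Rightarrow> real \<times> real) \<Rightarrow> nat \<Rightarrow> (nat \<Rightarrow> real \<times> real) \<Rightarrow> nat \<Rightarrow> bool" where
  "refl_pt n c \<sigma> p j \<longleftrightarrow> left_refl n c \<sigma> p j \<or> right_refl n c \<sigma> p j"

end

theory Submission
  imports Defs
begin

lemma seg_le:
  fixes a b :: "real \<times> real"
  shows "closed_segment a b \<subseteq> {q. fst q \<le> t} \<longleftrightarrow> fst a \<le> t \<and> fst b \<le> t"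
proof
  assume "closed_segment a b \<subseteq> {q. fst q \<le> t}"
  then show "fst a \<le> t \<and> fst b \<le> t" by auto
next
  assume h: "fst a \<le> t \<and> fst b \<le> t"
  show "closed_segment a b \<subseteq> {q. fst q \<le> t}"
  proof
    fix x assume "x \<in> closed_segment a b"
    then obtain u where u: "0 \<le> u" "u \<le> 1" "x = (1 - u) *\<^sub>R a + u *\<^sub>R b"
      unfolding closed_segment_def by auto
    have "fst x = (1-u) * fst a + u * fst b" using u by simp
    also have "\<dots> \<le> (1-u) * t + u * t"
      using h u by (intro add_mono mult_left_mono) auto
    finally show "x \<in> {q. fst q \<le> t}" by (simp add: algebra_simps)
  qed
qed

lemma seg_ge:
  fixes a b :: "real \<times> real"
  shows "closed_segment a b \<subseteq> {q. fst q \<ge> t} \<longleftrightarrow> fst a \<ge> t \<and> fst b \<ge> t"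
proof
  assume "closed_segment a b \<subseteq> {q. fst q \<ge> t}"
  then show "fst a \<ge> t \<and> fst b \<ge> t" by auto
next
  assume h: "fst a \<ge> t \<and> fst b \<ge> t"
  show "closed_segment a b \<subseteq> {q. fst q \<ge> t}"
  proof
    fix x assume "x \<in> closed_segment a b"
    then obtain u where u: "0 \<le> u" "u \<le> 1" "x = (1 - u) *\<^sub>R a + u *\<^sub>R b"
      unfolding closed_segment_def by auto
    have "(1-u) * t + u * t \<le> (1-u) * fst a + u * fst b"
      using h u by (intro add_mono mult_left_mono) auto
    also have "\<dots> = fst x" using u by simp
    finally show "x \<in> {q. fst q \<ge> t}" by (simp add: algebra_simps)
  qed
qed

lemma chain:
  fixes f :: "nat \<Rightarrow> real"
  assumes "f (j+1) < f j" and "j < j'"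
    and "\<forall>l. j < l \<and> l < j' \<longrightarrow> \<not> (f (l-1) \<ge> f l \<and> f (l+1) \<ge> f l)"
  shows "f j' < f (j'-1) \<and> f j' < f j"
proof -
  have "\<forall>d. j + d + 1 \<le> j' \<longrightarrow> f (j+d+1) < f (j+d) \<and> f (j+d+1) < f j"
  proof
    fix d show "j + d + 1 \<le> j' \<longrightarrow> f (j+d+1) < f (j+d) \<and> f (j+d+1) < f j"
    proof (induction d)
      case 0 then show ?case using assms by simp
    next
      case (Suc d)
      show ?case
      proof
        assume le: "j + Suc d + 1 \<le> j'"
        then have ih: "f (j+d+1) < f (j+d) \<and> f (j+d+1) < f j" using Suc by simp
        have "\<not> (f (j+d+1-1) \<ge> f (j+d+1) \<and> f (j+d+1+1) \<ge> f (j+d+1))"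
          using assms(3) le by auto
        then have "f (j+d+2) < f (j+d+1)" using ih by (simp add: numeral_2_eq_2)
        then show "f (j + Suc d + 1) < f (j + Suc d) \<and> f (j + Suc d + 1) < f j"
          using ih by simp
      qed
    qed
  qed
  moreover obtain d where d: "j' = j + d + 1" using assms(2) less_imp_Suc_add by fastforce
  ultimately show ?thesis by simp
qed

theorem lemma6:
  fixes n \<sigma> :: nat and c p :: "nat \<Rightarrow> real \<times> real" and i i' j j' :: nat
  assumes distinct_x: "inj_on (\<lambda>k. fst (c k)) {1..n}"
    and opt: "is_opt_tour n c \<sigma> p"
    and novert: "no_vertical_legs n c \<sigma> p"
    and nocross: "\<not> self_crossing \<sigma> p"
    and jj: "1 \<le> j" "j < j'" "j' \<le> \<sigma>"
    and rj: "refl_pt n c \<sigma> p j" and rj': "refl_pt n c \<sigma> p j'"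
    and between: "\<forall>l. j < l \<and> l < j' \<longrightarrow> \<not> refl_pt n c \<sigma> p l"
    and i: "i \<in> {1..n}" "p j \<in> seg c i"
    and i': "i' \<in> {1..n}" "p j' \<in> seg c i'"
  shows "\<not> (left_refl n c \<sigma> p j \<and> left_refl n c \<sigma> p j') \<and>
         \<not> (right_refl n c \<sigma> p j \<and> right_refl n c \<sigma> p j') \<and>
         (fst (c i) < fst (c i') \<longrightarrow> right_refl n c \<sigma> p j \<and> left_refl n c \<sigma> p j') \<and>
         (fst (c i') < fst (c i) \<longrightarrow> left_refl n c \<sigma> p j \<and> right_refl n c \<sigma> p j')"
proof -
  define X where "X l = fst (p l)" for l
  have tour: "is_tour n c \<sigma> p" using opt unfolding is_opt_tour_def by simp
  have onseg: "\<exists>k\<in>{1..n}. p l \<in> seg c k" if lin: "l \<in> {1..\<sigma>}" for l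
    using tour that unfolding is_tour_def by blast
  have segx: "X l = fst (c k)" if "p l \<in> seg c k" for l k
    using that unfolding seg_def X_def by simp
  have L: "left_refl n c \<sigma> p l \<longleftrightarrow> X (prv \<sigma> l) \<le> X l \<and> X (nxt \<sigma> l) \<le> X l"
    if lin: "l \<in> {1..\<sigma>}" for l
  proof
    assume "left_refl n c \<sigma> p l"
    then obtain k where k: "p l \<in> seg c k" "fst (p (prv \<sigma> l)) \<le> fst (c k)"
       "fst (p (nxt \<sigma> l)) \<le> fst (c k)"
      unfolding left_refl_def seg_le by blast
    have "X l = fst (c k)" using segx[OF k(1)] .
    then show "X (prv \<sigma> l) \<le> X l \<and> X (nxt \<sigma> l) \<le> X l" using k(2,3) unfolding X_def by simp
  next
    assume h: "X (prv \<sigma> l) \<le> X l \<and> X (nxt \<sigma> l) \<le> X l"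
    obtain k where k: "k \<in> {1..n}" "p l \<in> seg c k" using onseg lin by blast
    have "X l = fst (c k)" using segx[OF k(2)] .
    then show "left_refl n c \<sigma> p l" unfolding left_refl_def seg_le
      using k h unfolding X_def by auto
  qed
  have R: "right_refl n c \<sigma> p l \<longleftrightarrow> X (prv \<sigma> l) \<ge> X l \<and> X (nxt \<sigma> l) \<ge> X l"
    if lin: "l \<in> {1..\<sigma>}" for l
  proof
    assume "right_refl n c \<sigma> p l"
    then obtain k where k: "p l \<in> seg c k" "fst (p (prv \<sigma> l)) \<ge> fst (c k)"
       "fst (p (nxt \<sigma> l)) \<ge> fst (c k)"
      unfolding right_refl_def seg_ge by blast
    have "X l = fst (c k)" using segx[OF k(1)] .
    then show "X (prv \<sigma> l) \<ge> X l \<and> X (nxt \<sigma> l) \<ge> X l" using k(2,3) unfolding X_def by simp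
  next
    assume h: "X (prv \<sigma> l) \<ge> X l \<and> X (nxt \<sigma> l) \<ge> X l"
    obtain k where k: "k \<in> {1..n}" "p l \<in> seg c k" using onseg lin by blast
    have "X l = fst (c k)" using segx[OF k(2)] .
    then show "right_refl n c \<sigma> p l" unfolding right_refl_def seg_ge
      using k h unfolding X_def by auto
  qed
  have NE: "X (nxt \<sigma> l) \<noteq> X l" if lin: "l \<in> {1..\<sigma>}" for l
  proof
    assume eq: "X (nxt \<sigma> l) = X l"
    obtain k where k: "k \<in> {1..n}" "p l \<in> seg c k" using onseg lin by blast
    have "nxt \<sigma> l \<in> {1..\<sigma>}" using lin unfolding nxt_def by auto
    then obtain k' where k': "k' \<in> {1..n}" "p (nxt \<sigma> l) \<in> seg c k'" using onseg by blast
    have "fst (c k) = fst (c k')" using eq segx k k' by metis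
    then have "k = k'" using distinct_x k k' unfolding inj_on_def by blast
    then show False using novert lin k k' unfolding no_vertical_legs_def by blast
  qed
  have nxtj: "nxt \<sigma> j = j + 1" using jj unfolding nxt_def by auto
  have prvj': "prv \<sigma> j' = j' - 1" using jj unfolding prv_def by auto
  have inner: "\<not> (X (l-1) \<ge> X l \<and> X (l+1) \<ge> X l) \<and> \<not> (X (l-1) \<le> X l \<and> X (l+1) \<le> X l)"
    if "j < l" "l < j'" for l
  proof -
    have l: "l \<in> {1..\<sigma>}" using that jj by auto
    have e: "nxt \<sigma> l = l + 1" "prv \<sigma> l = l - 1" using that jj unfolding nxt_def prv_def by auto
    have "\<not> left_refl n c \<sigma> p l" "\<not> right_refl n c \<sigma> p l"
      using between that unfolding refl_pt_def by blast+
    then show ?thesis unfolding L[OF l] R[OF l] e by blast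
  qed
  have jin: "j \<in> {1..\<sigma>}" and j'in: "j' \<in> {1..\<sigma>}" using jj by auto
  have xi: "X j = fst (c i)" and xi': "X j' = fst (c i')" using segx i i' by auto
  show ?thesis
  proof (cases "X (j+1) < X j")
    case True
    have ch: "X j' < X (j'-1) \<and> X j' < X j"
      using chain[of X j j'] True jj(2) inner by blast
    have nr: "\<not> right_refl n c \<sigma> p j" unfolding R[OF jin] nxtj using True by simp
    have nl: "\<not> left_refl n c \<sigma> p j'" unfolding L[OF j'in] prvj' using ch by simp
    have "left_refl n c \<sigma> p j" using rj nr unfolding refl_pt_def by blast
    moreover have "right_refl n c \<sigma> p j'" using rj' nl unfolding refl_pt_def by blast
    moreover have "fst (c i') < fst (c i)" using ch xi xi' by simp
    ultimately show ?thesis using nr nl by simp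
  next
    case False
    then have F: "X (j+1) > X j" using NE[OF jin] nxtj by fastforce
    have "(\<lambda>l. - X l) j' < (\<lambda>l. - X l) (j'-1) \<and> (\<lambda>l. - X l) j' < (\<lambda>l. - X l) j"
      using chain[of "\<lambda>l. - X l" j j'] F jj(2) inner by auto
    then have ch: "X j' > X (j'-1) \<and> X j' > X j" by simp
    have nr: "\<not> left_refl n c \<sigma> p j" unfolding L[OF jin] nxtj using F by simp
    have nl: "\<not> right_refl n c \<sigma> p j'" unfolding R[OF j'in] prvj' using ch by simp
    have "right_refl n c \<sigma> p j" using rj nr unfolding refl_pt_def by blast
    moreover have "left_refl n c \<sigma> p j'" using rj' nl unfolding refl_pt_def by blast
    moreover have "fst (c i) < fst (c i')" using ch xi xi' by simp
    ultimately show ?thesis using nr nl by simp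
  qed
qed

end
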